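(* Let $M$ be the Fraïssé limit of a Fraïssé class of finite structures in a finite relational language $\mathcal{L}$ whose age has the Strong Amalgamation Property, and let $\tilde{M}$ be its imaginary cover, with $\tilde T=\mathrm{Th}(\tilde M)$. Then $\tilde T$ eliminates the quantifier $\exists^\infty$, and $\mathrm{acl}(X)=X$ for every subset $X$ of every model of $\tilde T$.
   Context: The imaginary cover $\tilde M$ of an $\mathcal{L}$-structure $M$ is the structure in the language $\mathcal{L}'=\mathcal{L}\cup\{E\}$ ($E$ a new binary relation symbol) obtained by replacing each element of $M$ by an infinite $E$-class: e.g. universe $M\times\omega$, $E((m,i),(m',j))$ iff $m=m'$, and each $R\in\mathcal{L}$ interpreted by $R((m_1,i_1),\dots,(m_n,i_n))$ iff $M\models R(m_1,\dots,m_n)$. SAP: for all $A,B,C$ in the class and embeddings $e:A\to B$, $f:A\to C$ there are $D$ and embeddings $g:B\to D$, $h:C\to D$ with $ge=hf$ and $\mathrm{im}(g)\cap\mathrm{im}(h)=\mathrm{im}(ge)$. *)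

theory Defs
  imports Main "HOL-Library.Countable_Set"
begin

text \<open>A relational structure: universe and interpretation of relation symbols
  as predicates on tuples (lists).\<close>
type_synonym ('r, 'a) struc = "'a set \<times> ('r \<Rightarrow> 'a list \<Rightarrow> bool)"

definition univ :: "('r, 'a) struc \<Rightarrow> 'a set" where "univ S = fst S"
definition rel :: "('r, 'a) struc \<Rightarrow> 'r \<Rightarrow> 'a list \<Rightarrow> bool" where "rel S = snd S"

definition wf_struc :: "('r \<Rightarrow> nat) \<Rightarrow> ('r, 'a) struc \<Rightarrow> bool" where
  "wf_struc ar S \<longleftrightarrow> (\<forall>r xs. rel S r xs \<longrightarrow> length xs = ar r \<and> set xs \<subseteq> univ S)"

datatype 'r fm =
    Eq nat nat
  | Rel 'r "nat list"
  | Neg "'r fm"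
  | Conj "'r fm" "'r fm"
  | Ex nat "'r fm"

fun fv :: "'r fm \<Rightarrow> nat set" where
  "fv (Eq i j) = {i, j}"
| "fv (Rel r vs) = set vs"
| "fv (Neg \<phi>) = fv \<phi>"
| "fv (Conj \<phi> \<psi>) = fv \<phi> \<union> fv \<psi>"
| "fv (Ex v \<phi>) = fv \<phi> - {v}"

fun sat :: "('r, 'a) struc \<Rightarrow> (nat \<Rightarrow> 'a) \<Rightarrow> 'r fm \<Rightarrow> bool" where
  "sat S e (Eq i j) = (e i = e j)"
| "sat S e (Rel r vs) = rel S r (map e vs)"
| "sat S e (Neg \<phi>) = (\<not> sat S e \<phi>)"
| "sat S e (Conj \<phi> \<psi>) = (sat S e \<phi> \<and> sat S e \<psi>)"
| "sat S e (Ex v \<phi>) = (\<exists>a\<in>univ S. sat S (e(v := a)) \<phi>)"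

text \<open>N is a model of Th(M): nonempty, and every sentence true in M is true in N
  (Th(M) is complete, so this is equivalent to elementary equivalence).\<close>
definition model_of_Th :: "('r, 'a) struc \<Rightarrow> ('r, 'b) struc \<Rightarrow> bool" where
  "model_of_Th M N \<longleftrightarrow> univ N \<noteq> {} \<and>
     (\<forall>\<phi> e e'. fv \<phi> = {} \<longrightarrow> sat M e \<phi> \<longrightarrow> sat N e' \<phi>)"

definition acl :: "('r, 'a) struc \<Rightarrow> 'a set \<Rightarrow> 'a set" where
  "acl N X = {a \<in> univ N. \<exists>\<phi> x e. (\<forall>v \<in> fv \<phi> - {x}. e v \<in> X) \<and>
      finite {c \<in> univ N. sat N (e(x := c)) \<phi>} \<and> sat N (e(x := a)) \<phi>}"

text \<open>Th(M) eliminates the quantifier exists-infinity: for each formula \<phi>(x, y) there is a bound n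
  such that every finite instance \<phi>(M, b) has at most n elements.  (For the complete
  theory Th(M) this is equivalent to the uniform bound in all models of Th(M).)\<close>
definition elim_exists_infty :: "('r, 'a) struc \<Rightarrow> bool" where
  "elim_exists_infty M \<longleftrightarrow> (\<forall>\<phi> x. \<exists>n::nat. \<forall>e. (\<forall>v. e v \<in> univ M) \<longrightarrow>
      finite {a \<in> univ M. sat M (e(x := a)) \<phi>} \<longrightarrow>
      card {a \<in> univ M. sat M (e(x := a)) \<phi>} \<le> n)"

definition induced :: "('r, 'a) struc \<Rightarrow> 'a set \<Rightarrow> ('r, 'a) struc" where
  "induced M A = (A, \<lambda>r xs. rel M r xs \<and> set xs \<subseteq> A)"

definition embedding :: "('a \<Rightarrow> 'b) \<Rightarrow> ('r, 'a) struc \<Rightarrow> ('r, 'b) struc \<Rightarrow> bool" where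
  "embedding f A B \<longleftrightarrow> inj_on f (univ A) \<and> f ` univ A \<subseteq> univ B \<and>
     (\<forall>r xs. set xs \<subseteq> univ A \<longrightarrow> (rel A r xs \<longleftrightarrow> rel B r (map f xs)))"

definition isomorphism :: "('a \<Rightarrow> 'b) \<Rightarrow> ('r, 'a) struc \<Rightarrow> ('r, 'b) struc \<Rightarrow> bool" where
  "isomorphism f A B \<longleftrightarrow> embedding f A B \<and> f ` univ A = univ B"

definition ultrahomogeneous :: "('r, 'a) struc \<Rightarrow> bool" where
  "ultrahomogeneous M \<longleftrightarrow> (\<forall>A B f. A \<subseteq> univ M \<longrightarrow> B \<subseteq> univ M \<longrightarrow> finite A \<longrightarrow>
     isomorphism f (induced M A) (induced M B) \<longrightarrow>
     (\<exists>g. isomorphism g M M \<and> (\<forall>a\<in>A. g a = f a)))"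

text \<open>Since the age is the class of
  finite structures embeddable in M (closed under isomorphism), it suffices to take
  finite substructures of M as representatives of A, B, C, D.\<close>
definition age_SAP :: "('r, 'a) struc \<Rightarrow> bool" where
  "age_SAP M \<longleftrightarrow> (\<forall>A B C e f.
     A \<subseteq> univ M \<longrightarrow> B \<subseteq> univ M \<longrightarrow> C \<subseteq> univ M \<longrightarrow> finite A \<longrightarrow> finite B \<longrightarrow> finite C \<longrightarrow>
     embedding e (induced M A) (induced M B) \<longrightarrow> embedding f (induced M A) (induced M C) \<longrightarrow>
     (\<exists>D g h. D \<subseteq> univ M \<and> finite D \<and>
        embedding g (induced M B) (induced M D) \<and> embedding h (induced M C) (induced M D) \<and>
        (\<forall>a\<in>A. g (e a) = h (f a)) \<and>
        g ` B \<inter> h ` C = (g \<circ> e) ` A))"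

text \<open>M is the Fraisse limit of a Fraisse class (namely its age): M is countable and
  ultrahomogeneous (Fraisse's theorem).\<close>
definition fraisse_limit :: "('r, 'a) struc \<Rightarrow> bool" where
  "fraisse_limit M \<longleftrightarrow> univ M \<noteq> {} \<and> countable (univ M) \<and> ultrahomogeneous M"

text \<open>Language L' = L \<union> {E}: the symbol None is E, Some r is r.\<close>
definition ar_cover :: "('r \<Rightarrow> nat) \<Rightarrow> 'r option \<Rightarrow> nat" where
  "ar_cover ar s = (case s of None \<Rightarrow> 2 | Some r \<Rightarrow> ar r)"

definition imag_cover :: "('r, 'a) struc \<Rightarrow> ('r option, 'a \<times> nat) struc" where
  "imag_cover M = (univ M \<times> UNIV,
     \<lambda>s xs. set xs \<subseteq> univ M \<times> UNIV \<and>
       (case s of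
          None \<Rightarrow> (\<exists>x y. xs = [x, y] \<and> fst x = fst y)
        | Some r \<Rightarrow> rel M r (map fst xs)))"

end

theory Submission imports Defs begin

definition TT :: "'r fm" where "TT = Neg (Ex 0 (Neg (Eq 0 0)))"

fun exs :: "nat list \<Rightarrow> 'r fm \<Rightarrow> 'r fm" where
  "exs [] \<psi> = \<psi>"
| "exs (v # vs) \<psi> = Ex v (exs vs \<psi>)"

fun noneq :: "nat \<Rightarrow> nat list \<Rightarrow> 'r fm" where
  "noneq x [] = TT"
| "noneq x (y # ys) = Conj (Neg (Eq x y)) (noneq x ys)"

fun distF :: "nat list \<Rightarrow> 'r fm" where
  "distF [] = TT"
| "distF (z # zs) = Conj (noneq z zs) (distF zs)"

fun allsat :: "'r fm \<Rightarrow> nat \<Rightarrow> nat list \<Rightarrow> 'r fm" where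
  "allsat \<phi> x [] = TT"
| "allsat \<phi> x (z # zs) = Conj (Ex x (Conj (Eq x z) \<phi>)) (allsat \<phi> x zs)"

lemma sat_TT[simp]: "sat S e TT" by (simp add: TT_def)
lemma fv_TT[simp]: "fv TT = {}" by (simp add: TT_def)

lemma sat_noneq[simp]: "sat S e (noneq x ys) \<longleftrightarrow> (\<forall>y\<in>set ys. e x \<noteq> e y)"
  by (induction ys) auto
lemma fv_noneq: "fv (noneq x ys) \<subseteq> insert x (set ys)"
  by (induction ys) auto

lemma sat_distF[simp]: "sat S e (distF zs) \<longleftrightarrow> distinct (map e zs)"
  by (induction zs) auto
lemma fv_distF: "fv (distF zs) \<subseteq> set zs"
  by (induction zs) (use fv_noneq in auto)

lemma sat_allsat: "x \<notin> set zs \<Longrightarrow>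
  sat S e (allsat \<phi> x zs) \<longleftrightarrow> (\<forall>z\<in>set zs. e z \<in> univ S \<and> sat S (e(x := e z)) \<phi>)"
  by (induction zs) auto
lemma fv_allsat: "fv (allsat \<phi> x zs) \<subseteq> (fv \<phi> - {x}) \<union> set zs"
  by (induction zs) auto

lemma fv_exs[simp]: "fv (exs vs \<psi>) = fv \<psi> - set vs"
  by (induction vs) auto

lemma sat_exs: "sat S e (exs vs \<psi>) \<longleftrightarrow>
  (\<exists>f. (\<forall>v\<in>set vs. f v \<in> univ S) \<and> (\<forall>v. v \<notin> set vs \<longrightarrow> f v = e v) \<and> sat S f \<psi>)"
proof (induction vs arbitrary: e)
  case Nil
  have "(\<forall>v. f v = e v) \<longleftrightarrow> f = e" for f :: "nat \<Rightarrow> 'a" by auto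
  then show ?case by simp
next
  case (Cons v vs)
  show ?case
  proof
    assume "sat S e (exs (v # vs) \<psi>)"
    then obtain a where a: "a \<in> univ S" "sat S (e(v := a)) (exs vs \<psi>)" by auto
    then obtain f where "(\<forall>v\<in>set vs. f v \<in> univ S)" "(\<forall>w. w \<notin> set vs \<longrightarrow> f w = (e(v:=a)) w)" "sat S f \<psi>"
      using Cons.IH by blast
    then show "\<exists>f. (\<forall>w\<in>set (v # vs). f w \<in> univ S) \<and> (\<forall>w. w \<notin> set (v # vs) \<longrightarrow> f w = e w) \<and> sat S f \<psi>"
      using a by (intro exI[of _ f]) (auto split: if_splits)
  next
    assume "\<exists>f. (\<forall>w\<in>set (v # vs). f w \<in> univ S) \<and> (\<forall>w. w \<notin> set (v # vs) \<longrightarrow> f w = e w) \<and> sat S f \<psi>"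
    then obtain f where f: "(\<forall>w\<in>set (v # vs). f w \<in> univ S)" "(\<forall>w. w \<notin> set (v # vs) \<longrightarrow> f w = e w)" "sat S f \<psi>"
      by blast
    have "sat S (e(v := f v)) (exs vs \<psi>)"
      unfolding Cons.IH by (intro exI[of _ f]) (use f in auto)
    then show "sat S e (exs (v # vs) \<psi>)" using f by auto
  qed
qed

lemma sat_cong: "(\<And>v. v \<in> fv \<phi> \<Longrightarrow> e v = e' v) \<Longrightarrow> sat S e \<phi> = sat S e' \<phi>"
proof (induction \<phi> arbitrary: e e')
  case (Eq i j)
  have "e i = e' i" "e j = e' j" using Eq by simp_all
  then show ?case by simp
next
  case (Rel r vs)
  have "map e vs = map e' vs" by (rule map_cong) (use Rel in simp_all)
  then show ?case by (simp only: sat.simps)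
next
  case (Neg \<phi>)
  have "sat S e \<phi> = sat S e' \<phi>" by (rule Neg.IH) (use Neg.prems in simp)
  then show ?case by (simp only: sat.simps)
next
  case (Conj \<phi> \<psi>)
  have "sat S e \<phi> = sat S e' \<phi>" by (rule Conj.IH(1)) (use Conj.prems in simp)
  moreover have "sat S e \<psi> = sat S e' \<psi>" by (rule Conj.IH(2)) (use Conj.prems in simp)
  ultimately show ?case by (simp only: sat.simps)
next
  case (Ex v \<phi>)
  have "sat S (e(v:=a)) \<phi> = sat S (e'(v:=a)) \<phi>" for a
  proof (rule Ex.IH)
    fix w assume w: "w \<in> fv \<phi>"
    show "(e(v:=a)) w = (e'(v:=a)) w"
    proof (cases "w = v")
      case False
      then have "w \<in> fv (Ex v \<phi>)" using w by simp
      then show ?thesis using Ex.prems False by simp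
    qed simp
  qed
  then show ?case by (simp only: sat.simps)
qed

lemma finite_fv: "finite (fv \<phi>)"
  by (induction \<phi>) simp_all

lemma univ_imag: "univ (imag_cover M) = univ M \<times> UNIV"
  unfolding imag_cover_def univ_def by (rule fst_conv)

lemma rel_imag_perm:
  assumes inv: "\<And>p. \<pi> (\<pi> p) = p" and fs: "\<And>p. fst (\<pi> p) = fst p"
  shows "rel (imag_cover M) s (map \<pi> xs) = rel (imag_cover M) s xs"
proof -
  have U: "\<pi> p \<in> A \<times> UNIV \<longleftrightarrow> p \<in> A \<times> UNIV" for p and A :: "'a set"
    by (simp add: mem_Times_iff fs)
  have 1: "set (map \<pi> xs) \<subseteq> univ M \<times> UNIV \<longleftrightarrow> set xs \<subseteq> univ M \<times> UNIV"
    unfolding set_map image_subset_iff U by blast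
  have 2: "map fst (map \<pi> xs) = map fst xs" by (simp add: fs)
  have 3: "(\<exists>x y. map \<pi> xs = [x, y] \<and> fst x = fst y) \<longleftrightarrow> (\<exists>x y. xs = [x, y] \<and> fst x = fst y)"
  proof (cases xs rule: remdups_adj.cases)
    case (3 x y zs)
    then show ?thesis by (cases zs) (simp_all add: fs)
  qed (simp_all)
  show ?thesis
    by (cases s) (simp_all only: rel_def imag_cover_def 1 2 3 snd_conv option.case)
qed

lemma sat_perm:
  assumes inv: "\<And>p. \<pi> (\<pi> p) = p" and fs: "\<And>p. fst (\<pi> p) = fst p"
  shows "sat (imag_cover M) (\<pi> \<circ> e) \<phi> = sat (imag_cover M) e \<phi>"
proof (induction \<phi> arbitrary: e)
  case (Eq i j)
  have "\<pi> (e i) = \<pi> (e j) \<longleftrightarrow> e i = e j" by (metis inv)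
  then show ?case by simp
next
  case (Rel r vs)
  have "map (\<pi> \<circ> e) vs = map \<pi> (map e vs)" by simp
  then show ?case using rel_imag_perm[OF inv fs, of M r "map e vs"] by (simp only: sat.simps)
next
  case (Neg \<phi>)
  then show ?case by simp
next
  case (Conj \<phi> \<psi>)
  then show ?case by simp
next
  case (Ex v \<phi>)
  have eq: "(\<pi> \<circ> e)(v := a) = \<pi> \<circ> (e(v := \<pi> a))" for a
    using inv by (auto simp: fun_eq_iff)
  have U: "\<pi> a \<in> univ M \<times> UNIV \<longleftrightarrow> a \<in> univ M \<times> UNIV" for a
    by (simp add: mem_Times_iff fs)
  have "(\<exists>a\<in>univ M \<times> UNIV. sat (imag_cover M) (e(v := \<pi> a)) \<phi>) \<longleftrightarrow>
        (\<exists>a\<in>univ M \<times> UNIV. sat (imag_cover M) (e(v := a)) \<phi>)"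
  proof
    assume "\<exists>a\<in>univ M \<times> UNIV. sat (imag_cover M) (e(v := \<pi> a)) \<phi>"
    then obtain a where "a \<in> univ M \<times> UNIV" "sat (imag_cover M) (e(v := \<pi> a)) \<phi>" by blast
    then show "\<exists>a\<in>univ M \<times> UNIV. sat (imag_cover M) (e(v := a)) \<phi>" using U by blast
  next
    assume "\<exists>a\<in>univ M \<times> UNIV. sat (imag_cover M) (e(v := a)) \<phi>"
    then obtain a where "a \<in> univ M \<times> UNIV" "sat (imag_cover M) (e(v := a)) \<phi>" by blast
    then have "\<pi> a \<in> univ M \<times> UNIV" "sat (imag_cover M) (e(v := \<pi> (\<pi> a))) \<phi>" using U inv by simp_all
    then show "\<exists>a\<in>univ M \<times> UNIV. sat (imag_cover M) (e(v := \<pi> a)) \<phi>" by (rule bexI[rotated])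
  qed
  then show ?case by (simp only: sat.simps univ_imag eq Ex.IH)
qed

definition swp :: "'c \<Rightarrow> 'c \<Rightarrow> 'c \<Rightarrow> 'c" where
  "swp a q p = (if p = a then q else if p = q then a else p)"

lemma class_inf: "infinite (({c} \<times> (UNIV::nat set)) - F)" if "finite F"
proof -
  have "infinite ((\<lambda>n::nat. (c, n)) ` UNIV)"
    by (rule range_inj_infinite) (auto simp: inj_def)
  moreover have "(\<lambda>n::nat. (c, n)) ` UNIV = {c} \<times> UNIV" by auto
  ultimately show ?thesis using that by (simp add: Diff_infinite_finite)
qed

lemma class_many:
  fixes M :: "('r,'a) struc"
  assumes a: "a \<in> univ (imag_cover M)" and s: "sat (imag_cover M) (f(x:=a)) \<phi>"
    and n: "a \<notin> f ` (fv \<phi> - {x})"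
    and q: "q \<in> ({fst a} \<times> UNIV) - f ` (fv \<phi> - {x})"
  shows "q \<in> univ (imag_cover M) \<and> sat (imag_cover M) (f(x:=q)) \<phi>"
proof
  show "q \<in> univ (imag_cover M)" using a q by (auto simp: univ_imag mem_Times_iff)
  have fq: "fst q = fst a" using q by auto
  have inv: "\<And>p. swp a q (swp a q p) = p" by (simp add: swp_def)
  have fs: "\<And>p. fst (swp a q p) = fst p" using fq by (simp add: swp_def)
  have "sat (imag_cover M) (swp a q \<circ> (f(x:=a))) \<phi>"
    using sat_perm[OF inv fs, of M "f(x:=a)" \<phi>] s by simp
  moreover have "sat (imag_cover M) (swp a q \<circ> (f(x:=a))) \<phi> = sat (imag_cover M) (f(x:=q)) \<phi>"
  proof (rule sat_cong)
    fix v assume v: "v \<in> fv \<phi>"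
    show "(swp a q \<circ> f(x := a)) v = (f(x := q)) v"
    proof (cases "v = x")
      case True then show ?thesis by (simp add: swp_def)
    next
      case False
      then have "f v \<in> f ` (fv \<phi> - {x})" using v by auto
      then have "f v \<noteq> a" "f v \<noteq> q" using n q by auto
      then show ?thesis using False by (simp add: swp_def)
    qed
  qed
  ultimately show "sat (imag_cover M) (f(x:=q)) \<phi>" by simp
qed

lemma elim_part: fixes M :: "('r,'a) struc" shows "elim_exists_infty (imag_cover M)"
  unfolding elim_exists_infty_def
proof (intro allI)
  fix \<phi> :: "'r option fm" and x
  show "\<exists>n. \<forall>e. (\<forall>v. e v \<in> univ (imag_cover M)) \<longrightarrow>
         finite {a \<in> univ (imag_cover M). sat (imag_cover M) (e(x := a)) \<phi>} \<longrightarrow>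
         card {a \<in> univ (imag_cover M). sat (imag_cover M) (e(x := a)) \<phi>} \<le> n"
  proof (intro exI[of _ "card (fv \<phi>)"] allI impI)
    fix e
    let ?S = "{a \<in> univ (imag_cover M). sat (imag_cover M) (e(x := a)) \<phi>}"
    let ?F = "e ` (fv \<phi> - {x})"
    assume fin: "finite ?S"
    have finD: "finite (fv \<phi> - {x})" using finite_fv[of \<phi>] by (rule finite_Diff)
    have finF: "finite ?F" using finD by (rule finite_imageI)
    have sub: "?S \<subseteq> ?F"
    proof
      fix a assume aS: "a \<in> ?S"
      have aU: "a \<in> univ (imag_cover M)" and sa: "sat (imag_cover M) (e(x := a)) \<phi>"
        using aS by simp_all
      show "a \<in> ?F"
      proof (rule ccontr)
        assume n: "a \<notin> ?F"
        have "({fst a} \<times> UNIV) - ?F \<subseteq> ?S"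
        proof
          fix q assume q: "q \<in> ({fst a} \<times> UNIV) - ?F"
          have "q \<in> univ (imag_cover M) \<and> sat (imag_cover M) (e(x:=q)) \<phi>"
            by (rule class_many[OF aU sa n q])
          then show "q \<in> ?S" by simp
        qed
        then have "finite (({fst a} \<times> UNIV) - ?F)" using fin by (rule finite_subset)
        moreover have "infinite (({fst a} \<times> UNIV) - ?F)" by (rule class_inf[OF finF])
        ultimately show False by contradiction
      qed
    qed
    have "card ?S \<le> card ?F" by (rule card_mono[OF finF sub])
    also have "\<dots> \<le> card (fv \<phi> - {x})" by (rule card_image_le[OF finD])
    also have "\<dots> \<le> card (fv \<phi>)" by (rule card_mono[OF finite_fv Diff_subset])
    finally show "card ?S \<le> card (fv \<phi>)" .
  qed
qed

definition Theta :: "'r fm \<Rightarrow> nat \<Rightarrow> nat \<Rightarrow> nat \<Rightarrow> 'r fm" where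
  "Theta \<phi> x z0 k = Neg (exs (sorted_list_of_set (fv \<phi> - {x}))
     (Conj (Ex x (Conj \<phi> (noneq x (sorted_list_of_set (fv \<phi> - {x})))))
       (Neg (exs [z0..<z0+k] (Conj (distF [z0..<z0+k]) (allsat \<phi> x [z0..<z0+k]))))))"

lemma fv_Theta: "fv (Theta \<phi> x z0 k) = {}"
proof -
  let ?ys = "sorted_list_of_set (fv \<phi> - {x})"
  let ?zs = "[z0..<z0+k]"
  have ys: "set ?ys = fv \<phi> - {x}" using finite_fv[of \<phi>] by simp
  have 1: "fv (Ex x (Conj \<phi> (noneq x ?ys))) \<subseteq> set ?ys"
    using fv_noneq[of x ?ys] ys by auto
  have 2: "fv (exs ?zs (Conj (distF ?zs) (allsat \<phi> x ?zs))) \<subseteq> set ?ys"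
    using fv_distF[of ?zs] fv_allsat[of \<phi> x ?zs] ys by auto
  show ?thesis unfolding Theta_def using 1 2 by auto
qed

lemma sat_Theta_gen:
  assumes z0: "\<forall>v \<in> insert x (fv \<phi>). v < z0"
  shows "sat S e0 (Theta \<phi> x z0 k) \<longleftrightarrow>
    \<not> (\<exists>f. (\<forall>v\<in>fv \<phi> - {x}. f v \<in> univ S) \<and> (\<forall>v. v \<notin> fv \<phi> - {x} \<longrightarrow> f v = e0 v) \<and>
       (\<exists>a\<in>univ S. sat S (f(x := a)) \<phi> \<and> (\<forall>y\<in>fv \<phi> - {x}. a \<noteq> f y)) \<and>
       \<not> (\<exists>g. (\<forall>v\<in>{z0..<z0+k}. g v \<in> univ S) \<and> (\<forall>v. v \<notin> {z0..<z0+k} \<longrightarrow> g v = f v) \<and>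
          distinct (map g [z0..<z0+k]) \<and>
          (\<forall>z\<in>{z0..<z0+k}. g z \<in> univ S \<and> sat S (g(x := g z)) \<phi>)))"
proof -
  have ys: "set (sorted_list_of_set (fv \<phi> - {x})) = fv \<phi> - {x}" using finite_fv[of \<phi>] by simp
  have xz: "x \<notin> set [z0..<z0+k]" using z0 by auto
  show ?thesis
    unfolding Theta_def sat.simps sat_exs ys sat_noneq sat_distF sat_allsat[OF xz]
    by (simp cong: conj_cong)
qed

lemma theta_M:
  fixes M :: "('r,'a) struc"
  assumes z0: "\<forall>v \<in> insert x (fv \<phi>). v < z0"
  shows "sat (imag_cover M) e0 (Theta \<phi> x z0 k)"
  unfolding sat_Theta_gen[OF z0]
proof (intro notI, elim exE conjE bexE)
  let ?C = "imag_cover M"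
  fix f :: "nat \<Rightarrow> 'a \<times> nat" and a
  let ?F = "f ` (fv \<phi> - {x})"
  assume fU: "\<forall>v\<in>fv \<phi> - {x}. f v \<in> univ ?C"
    and aU: "a \<in> univ ?C" and sa: "sat ?C (f(x := a)) \<phi>" and an: "\<forall>y\<in>fv \<phi> - {x}. a \<noteq> f y"
    and no: "\<not> (\<exists>g. (\<forall>v\<in>{z0..<z0+k}. g v \<in> univ ?C) \<and> (\<forall>v. v \<notin> {z0..<z0+k} \<longrightarrow> g v = f v) \<and>
          distinct (map g [z0..<z0+k]) \<and>
          (\<forall>z\<in>{z0..<z0+k}. g z \<in> univ ?C \<and> sat ?C (g(x := g z)) \<phi>))"
  have n: "a \<notin> ?F"
  proof
    assume "a \<in> ?F"
    then obtain y where "y \<in> fv \<phi> - {x}" "a = f y" by blast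
    with an show False by blast
  qed
  have finF: "finite ?F" using finite_fv[of \<phi>] by simp
  have inf: "infinite (({fst a} \<times> UNIV) - ?F)" by (rule class_inf[OF finF])
  obtain B where B: "finite B" "card B = k" "B \<subseteq> ({fst a} \<times> UNIV) - ?F"
    using infinite_arbitrarily_large[OF inf, of k] by blast
  obtain qs where qs: "set qs = B" "distinct qs" using finite_distinct_list[OF B(1)] by blast
  have lq: "length qs = k" using distinct_card[OF qs(2)] qs(1) B(2) by simp
  define g where "g v = (if z0 \<le> v \<and> v < z0 + k then qs ! (v - z0) else f v)" for v
  have mg: "map g [z0..<z0+k] = qs"
    by (rule nth_equalityI) (simp_all add: g_def lq)
  have gq: "g z \<in> B" if z: "z \<in> {z0..<z0+k}" for z
  proof -
    have "g z = qs ! (z - z0)" using z by (simp add: g_def)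
    moreover have "z - z0 < length qs" using z lq by (simp add: less_diff_conv2 add.commute)
    ultimately show ?thesis using qs(1) by (metis nth_mem)
  qed
  have gout: "g v = f v" if "v \<notin> {z0..<z0+k}" for v
  proof -
    have "\<not> (z0 \<le> v \<and> v < z0 + k)" using that by simp
    then show ?thesis unfolding g_def by (rule if_not_P)
  qed
  have good: "g z \<in> univ ?C \<and> sat ?C (g(x := g z)) \<phi>" if z: "z \<in> {z0..<z0+k}" for z
  proof -
    have q: "g z \<in> ({fst a} \<times> UNIV) - ?F" using gq[OF z] B(3) by blast
    have 1: "g z \<in> univ ?C \<and> sat ?C (f(x := g z)) \<phi>"
      by (rule class_many[OF aU sa n q])
    have 2: "sat ?C (g(x := g z)) \<phi> = sat ?C (f(x := g z)) \<phi>"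
    proof (rule sat_cong)
      fix v assume v: "v \<in> fv \<phi>"
      show "(g(x := g z)) v = (f(x := g z)) v"
      proof (cases "v = x")
        case False
        have "v < z0" using z0 v by blast
        then have "g v = f v" by (intro gout) simp
        then show ?thesis using False by simp
      qed simp
    qed
    show ?thesis using 1 2 by simp
  qed
  have "\<exists>g. (\<forall>v\<in>{z0..<z0+k}. g v \<in> univ ?C) \<and> (\<forall>v. v \<notin> {z0..<z0+k} \<longrightarrow> g v = f v) \<and>
          distinct (map g [z0..<z0+k]) \<and>
          (\<forall>z\<in>{z0..<z0+k}. g z \<in> univ ?C \<and> sat ?C (g(x := g z)) \<phi>)"
  proof (intro exI[of _ g] conjI ballI allI impI)
    show "distinct (map g [z0..<z0+k])" using mg qs(2) by simp
  qed (simp_all add: good gout)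
  with no show False by blast
qed

lemma acl_part:
  fixes M :: "('r,'a) struc" and N :: "('r option,'b) struc"
  assumes mod: "model_of_Th (imag_cover M) N" and XN: "X \<subseteq> univ N"
  shows "acl N X = X"
proof
  show "X \<subseteq> acl N X"
  proof
    fix a assume aX: "a \<in> X"
    have aU: "a \<in> univ N" using aX XN by blast
    let ?e = "\<lambda>_::nat. a"
    have 1: "sat N (?e(0 := a)) (Eq 0 1)" by simp
    have "{c \<in> univ N. sat N (?e(0 := c)) (Eq 0 1)} \<subseteq> {a}"
    proof
      fix c assume "c \<in> {c \<in> univ N. sat N (?e(0 := c)) (Eq 0 1)}"
      then have "sat N (?e(0 := c)) (Eq 0 1)" by (simp only: mem_Collect_eq)
      then show "c \<in> {a}" by simp
    qed
    then have 2: "finite {c \<in> univ N. sat N (?e(0 := c)) (Eq 0 1)}" by (rule finite_subset) simp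
    have 3: "\<forall>v\<in>fv (Eq 0 1 :: 'r option fm) - {0}. ?e v \<in> X" using aX by simp
    have "\<exists>\<phi> x e. (\<forall>v \<in> fv \<phi> - {x}. e v \<in> X) \<and>
      finite {c \<in> univ N. sat N (e(x := c)) \<phi>} \<and> sat N (e(x := a)) \<phi>"
      apply (rule exI[of _ "Eq 0 1 :: 'r option fm"], rule exI[of _ 0], rule exI[of _ ?e])
      using 1 2 3 by (intro conjI)
    with aU show "a \<in> acl N X" unfolding acl_def by (intro CollectI conjI)
  qed
next
  show "acl N X \<subseteq> X"
  proof
    fix a assume "a \<in> acl N X"
    then have aU: "a \<in> univ N" and "\<exists>\<phi> x e. (\<forall>v \<in> fv \<phi> - {x}. e v \<in> X) \<and>
      finite {c \<in> univ N. sat N (e(x := c)) \<phi>} \<and> sat N (e(x := a)) \<phi>"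
      unfolding acl_def by simp_all
    then obtain \<phi> x e where eX: "\<forall>v \<in> fv \<phi> - {x}. e v \<in> X"
      and fin: "finite {c \<in> univ N. sat N (e(x := c)) \<phi>}" and sa: "sat N (e(x := a)) \<phi>"
      by blast
    let ?S = "{c \<in> univ N. sat N (e(x := c)) \<phi>}"
    show "a \<in> X"
    proof (rule ccontr)
      assume aX: "a \<notin> X"
      define k where "k = Suc (card ?S)"
      define z0 where "z0 = Suc (Max (insert x (fv \<phi>)))"
      have z0: "\<forall>v \<in> insert x (fv \<phi>). v < z0"
      proof
        fix v assume "v \<in> insert x (fv \<phi>)"
        then have "v \<le> Max (insert x (fv \<phi>))" using finite_fv[of \<phi>] by simp
        then show "v < z0" unfolding z0_def by simp
      qed
      have sM: "sat (imag_cover M) (\<lambda>_. undefined) (Theta \<phi> x z0 k)" by (rule theta_M[OF z0])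
      have "sat N e (Theta \<phi> x z0 k)"
      proof -
        have "\<forall>\<phi> e e'. fv \<phi> = {} \<longrightarrow> sat (imag_cover M) e \<phi> \<longrightarrow> sat N e' \<phi>"
          using mod unfolding model_of_Th_def by (rule conjunct2)
        then show ?thesis using fv_Theta[of \<phi> x z0 k] sM by blast
      qed
      then have nex: "\<not> (\<exists>f. (\<forall>v\<in>fv \<phi> - {x}. f v \<in> univ N) \<and> (\<forall>v. v \<notin> fv \<phi> - {x} \<longrightarrow> f v = e v) \<and>
       (\<exists>a\<in>univ N. sat N (f(x := a)) \<phi> \<and> (\<forall>y\<in>fv \<phi> - {x}. a \<noteq> f y)) \<and>
       \<not> (\<exists>g. (\<forall>v\<in>{z0..<z0+k}. g v \<in> univ N) \<and> (\<forall>v. v \<notin> {z0..<z0+k} \<longrightarrow> g v = f v) \<and>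
          distinct (map g [z0..<z0+k]) \<and>
          (\<forall>z\<in>{z0..<z0+k}. g z \<in> univ N \<and> sat N (g(x := g z)) \<phi>)))"
        unfolding sat_Theta_gen[OF z0] .
      have c1: "\<forall>v\<in>fv \<phi> - {x}. e v \<in> univ N" using eX XN by blast
      have c2: "\<forall>y\<in>fv \<phi> - {x}. a \<noteq> e y" using eX aX by blast
      have "\<exists>g. (\<forall>v\<in>{z0..<z0+k}. g v \<in> univ N) \<and> (\<forall>v. v \<notin> {z0..<z0+k} \<longrightarrow> g v = e v) \<and>
          distinct (map g [z0..<z0+k]) \<and>
          (\<forall>z\<in>{z0..<z0+k}. g z \<in> univ N \<and> sat N (g(x := g z)) \<phi>)"
      proof (rule ccontr)
        assume h: "\<not> ?thesis"
        have "\<exists>f. (\<forall>v\<in>fv \<phi> - {x}. f v \<in> univ N) \<and> (\<forall>v. v \<notin> fv \<phi> - {x} \<longrightarrow> f v = e v) \<and>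
          (\<exists>a\<in>univ N. sat N (f(x := a)) \<phi> \<and> (\<forall>y\<in>fv \<phi> - {x}. a \<noteq> f y)) \<and>
          \<not> (\<exists>g. (\<forall>v\<in>{z0..<z0+k}. g v \<in> univ N) \<and> (\<forall>v. v \<notin> {z0..<z0+k} \<longrightarrow> g v = f v) \<and>
             distinct (map g [z0..<z0+k]) \<and>
             (\<forall>z\<in>{z0..<z0+k}. g z \<in> univ N \<and> sat N (g(x := g z)) \<phi>))"
        proof (rule exI[of _ e], intro conjI)
          show "\<exists>a\<in>univ N. sat N (e(x := a)) \<phi> \<and> (\<forall>y\<in>fv \<phi> - {x}. a \<noteq> e y)"
            using aU sa c2 by blast
        qed (use c1 h in simp_all)
        with nex show False by contradiction
      qed
      then obtain g where ge: "\<forall>v. v \<notin> {z0..<z0+k} \<longrightarrow> g v = e v"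
        and gd: "distinct (map g [z0..<z0+k])"
        and gs: "\<forall>z\<in>{z0..<z0+k}. g z \<in> univ N \<and> sat N (g(x := g z)) \<phi>"
        by blast
      have gS: "g ` {z0..<z0+k} \<subseteq> ?S"
      proof
        fix c assume "c \<in> g ` {z0..<z0+k}"
        then obtain z where z: "z \<in> {z0..<z0+k}" and cz: "c = g z" by blast
        have "sat N (g(x := g z)) \<phi> = sat N (e(x := g z)) \<phi>"
        proof (rule sat_cong)
          fix v assume v: "v \<in> fv \<phi>"
          show "(g(x := g z)) v = (e(x := g z)) v"
          proof (cases "v = x")
            case False
            have "v < z0" using z0 v by blast
            then have "v \<notin> {z0..<z0+k}" by simp
            then have "g v = e v" using ge by blast
            then show ?thesis using False by simp
          qed simp
        qed
        then show "c \<in> ?S" using gs z cz by simp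
      qed
      moreover have "card (g ` {z0..<z0+k}) = k"
      proof -
        have "inj_on g (set [z0..<z0+k])" using gd by (simp add: distinct_map)
        then have "card (g ` {z0..<z0+k}) = card {z0..<z0+k}" by (simp add: card_image)
        then show ?thesis by simp
      qed
      moreover have "card (g ` {z0..<z0+k}) \<le> card ?S" by (rule card_mono[OF fin gS])
      ultimately have "k \<le> card ?S" by simp
      then show False by (simp add: k_def)
    qed
  qed
qed

theorem mainTheorem8:
  fixes ar :: "'r::finite \<Rightarrow> nat"
    and M :: "('r, 'a) struc"
  assumes "wf_struc ar M"
    and "fraisse_limit M"
    and "age_SAP M"
  shows "elim_exists_infty (imag_cover M) \<and>
    (\<forall>(N :: ('r option, 'b) struc) X.
        wf_struc (ar_cover ar) N \<longrightarrow> model_of_Th (imag_cover M) N \<longrightarrow>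
        X \<subseteq> univ N \<longrightarrow> acl N X = X)"
proof (intro conjI allI impI)
  show "elim_exists_infty (imag_cover M)" by (rule elim_part)
next
  fix N :: "('r option, 'b) struc" and X
  assume "model_of_Th (imag_cover M) N" "X \<subseteq> univ N"
  then show "acl N X = X" by (rule acl_part)
qed

end
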